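(* Consider the Gaussian broadcast model on $P=\mathcal{HS}_2$ with $\alpha_2=1/2$. For every positive integer $t$, every positive integer $N$, and all reals $a_1,\dots,a_N$ not all zero, the random variable $\zeta:=a_1X_{(1,t-1)}+\cdots+a_NX_{(N,t-N)}$ satisfies $$\frac{\operatorname{Cov}(\zeta,X_0)}{\sqrt{\operatorname{Var}(\zeta)}}\le\frac{2^{14}N^{3/2}}{t^{1/4}}.$$
   Context: Infinite model: $\mathcal{HS}_{d+1}=\{(x_1,\dots,x_{d+1})\in\mathbb Z^{d+1}:x_1+\dots+x_{d+1}\ge0\}$ with $u\le v$ iff $v-u\in\mathbb Z_{\ge0}^{d+1}$; layer $L_t$ = points with coordinate sum $t$; each point $v$ of rank $\ge1$ covers exactly the $d+1$ points $v-e_i$ (the set $\mathfrak p(v)$). Gaussian broadcast model: $X_0\sim\mathcal N(0,1)$; independently, i.i.d. $W_{u\to v}\sim\mathcal N(0,1)$ for covering pairs $u\lessdot v$; $X_v=X_0$ for every $v\in L_0$; and $X_v=\alpha_{d+1}\sum_{u\in\mathfrak p(v)}(X_u+W_{u\to v})$ for $v$ of rank $\ge1$. Here $d=1$. *)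

theory Defs
  imports "HOL-Probability.Probability"
begin

definition rank2 :: "int \<times> int \<Rightarrow> int" where
  "rank2 v = fst v + snd v"

definition HS2 :: "(int \<times> int) set" where
  "HS2 = {v. rank2 v \<ge> 0}"

definition parent2 :: "int \<times> int \<Rightarrow> nat \<Rightarrow> int \<times> int" where
  "parent2 v i = (if i = 0 then (fst v - 1, snd v) else (fst v, snd v - 1))"

text \<open>Covering pairs u \<lessdot> v in HS_2 are indexed by (v,i) with rank v \<ge> 1 and i \<in> {0,1},
  where u = parent2 v i.\<close>
definition edges2 :: "((int \<times> int) \<times> nat) set" where
  "edges2 = {(v, i). rank2 v \<ge> 1 \<and> i \<in> {0, 1}}"

definition gaussian_broadcast_HS2 ::
  "'a measure \<Rightarrow> ('a \<Rightarrow> real) \<Rightarrow> ((int \<times> int) \<times> nat \<Rightarrow> 'a \<Rightarrow> real)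
     \<Rightarrow> (int \<times> int \<Rightarrow> 'a \<Rightarrow> real) \<Rightarrow> bool" where
  "gaussian_broadcast_HS2 M X0 W X \<longleftrightarrow>
     prob_space M \<and>
     prob_space.indep_vars M (\<lambda>_. borel)
        (\<lambda>j. case j of None \<Rightarrow> X0 | Some e \<Rightarrow> W e) ({None} \<union> Some ` edges2) \<and>
     distributed M lborel X0 std_normal_density \<and>
     (\<forall>e\<in>edges2. distributed M lborel (W e) std_normal_density) \<and>
     (\<forall>v. rank2 v = 0 \<longrightarrow> (\<forall>\<omega>\<in>space M. X v \<omega> = X0 \<omega>)) \<and>
     (\<forall>v. rank2 v \<ge> 1 \<longrightarrow> (\<forall>\<omega>\<in>space M.
        X v \<omega> = (1/2) * (\<Sum>i\<in>{0,1::nat}. X (parent2 v i) \<omega> + W (v, i) \<omega>)))"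

end

theory Submission
  imports Defs "HOL-Analysis.Analysis"
begin


lemma std_gauss_facts:
  assumes P: "prob_space M" and D: "distributed M lborel Y std_normal_density"
  shows "integrable M Y" "integrable M (\<lambda>\<omega>. Y \<omega> * Y \<omega>)"
    "(\<integral>\<omega>. Y \<omega> \<partial>M) = 0" "(\<integral>\<omega>. Y \<omega> * Y \<omega> \<partial>M) = 1"
proof -
  interpret prob_space M by (rule P)
  show "integrable M Y"
    using distributed_integrable[OF D, of "\<lambda>x. x"] integrable_std_normal_moment[of 1] by simp
  show "integrable M (\<lambda>\<omega>. Y \<omega> * Y \<omega>)"
    using distributed_integrable[OF D, of "\<lambda>x. x * x"] integrable_std_normal_moment[of 2]
    by (simp add: power2_eq_square)
  show "(\<integral>\<omega>. Y \<omega> \<partial>M) = 0"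
    using standard_normal_distributed_expectation[OF D] by simp
  have "(\<integral>\<omega>. Y \<omega> * Y \<omega> \<partial>M) = (\<integral>x. std_normal_density x * (x * x) \<partial>lborel)"
    by (rule distributed_integral[OF D, symmetric]) auto
  also have "\<dots> = 1" using integral_std_normal_moment_even[of 1]
    by (simp add: power2_eq_square)
  finally show "(\<integral>\<omega>. Y \<omega> * Y \<omega> \<partial>M) = 1" .
qed



definition Yf :: "('a \<Rightarrow> real) \<Rightarrow> ((int \<times> int) \<times> nat \<Rightarrow> 'a \<Rightarrow> real) \<Rightarrow> ((int \<times> int) \<times> nat) option \<Rightarrow> 'a \<Rightarrow> real" where
  "Yf X0 W j = (case j of None \<Rightarrow> X0 | Some e \<Rightarrow> W e)"

lemma model_orth:
  assumes model: "gaussian_broadcast_HS2 M X0 W X"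
    and j: "j \<in> {None} \<union> Some ` edges2" and j': "j' \<in> {None} \<union> Some ` edges2"
  shows "integrable M (Yf X0 W j)" "(\<integral>\<omega>. Yf X0 W j \<omega> \<partial>M) = 0"
    "integrable M (\<lambda>\<omega>. Yf X0 W j \<omega> * Yf X0 W j' \<omega>)"
    "(\<integral>\<omega>. Yf X0 W j \<omega> * Yf X0 W j' \<omega> \<partial>M) = (if j = j' then 1 else 0)"
proof -
  have P: "prob_space M" using model by (simp add: gaussian_broadcast_HS2_def)
  interpret prob_space M by (rule P)
  have ind: "indep_vars (\<lambda>_. borel) (Yf X0 W) ({None} \<union> Some ` edges2)"
    using model unfolding gaussian_broadcast_HS2_def Yf_def by simp
  have D: "distributed M lborel (Yf X0 W i) std_normal_density" if "i \<in> {None} \<union> Some ` edges2" for i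
    using model that unfolding gaussian_broadcast_HS2_def Yf_def by auto
  note f = std_gauss_facts[OF P D]
  show "integrable M (Yf X0 W j)" "(\<integral>\<omega>. Yf X0 W j \<omega> \<partial>M) = 0" using f j by auto
  have "integrable M (\<lambda>\<omega>. Yf X0 W j \<omega> * Yf X0 W j' \<omega>) \<and>
    (\<integral>\<omega>. Yf X0 W j \<omega> * Yf X0 W j' \<omega> \<partial>M) = (if j = j' then 1 else 0)"
  proof (cases "j = j'")
    case True then show ?thesis using f j by auto
  next
    case False
    have ind2: "indep_vars (\<lambda>_. borel) (Yf X0 W) {j, j'}"
      by (rule indep_vars_subset[OF ind]) (use j j' in auto)
    have i2: "\<And>i. i \<in> {j,j'} \<Longrightarrow> integrable M (Yf X0 W i)" using f j j' by auto
    have e: "\<And>\<omega>. (\<Prod>i\<in>{j,j'}. Yf X0 W i \<omega>) = Yf X0 W j \<omega> * Yf X0 W j' \<omega>" using False by simp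
    have "integrable M (\<lambda>\<omega>. \<Prod>i\<in>{j,j'}. Yf X0 W i \<omega>)"
      by (rule indep_vars_integrable[OF _ ind2 i2]) auto
    moreover have "(\<integral>\<omega>. (\<Prod>i\<in>{j,j'}. Yf X0 W i \<omega>) \<partial>M) = (\<Prod>i\<in>{j,j'}. \<integral>\<omega>. Yf X0 W i \<omega> \<partial>M)"
      by (rule indep_vars_lebesgue_integral[OF _ ind2 i2]) auto
    ultimately show ?thesis using False f j j' by (simp add: e)
  qed
  then show "integrable M (\<lambda>\<omega>. Yf X0 W j \<omega> * Yf X0 W j' \<omega>)"
    "(\<integral>\<omega>. Yf X0 W j \<omega> * Yf X0 W j' \<omega> \<partial>M) = (if j = j' then 1 else 0)" by auto
qed

lemma lincomb:
  fixes Y :: "'i \<Rightarrow> 'a \<Rightarrow> real"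
  assumes fin: "finite J"
    and i1: "\<And>j. j \<in> J \<Longrightarrow> integrable M (Y j)"
    and m1: "\<And>j. j \<in> J \<Longrightarrow> (\<integral>\<omega>. Y j \<omega> \<partial>M) = 0"
    and i2: "\<And>j j'. j \<in> J \<Longrightarrow> j' \<in> J \<Longrightarrow> integrable M (\<lambda>\<omega>. Y j \<omega> * Y j' \<omega>)"
    and m2: "\<And>j j'. j \<in> J \<Longrightarrow> j' \<in> J \<Longrightarrow> (\<integral>\<omega>. Y j \<omega> * Y j' \<omega> \<partial>M) = (if j = j' then 1 else 0)"
    and j0: "j0 \<in> J"
  shows "(\<integral>\<omega>. (\<Sum>j\<in>J. c j * Y j \<omega>) \<partial>M) = 0"
    "(\<integral>\<omega>. (\<Sum>j\<in>J. c j * Y j \<omega>) * Y j0 \<omega> \<partial>M) = c j0"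
    "(\<integral>\<omega>. (\<Sum>j\<in>J. c j * Y j \<omega>)\<^sup>2 \<partial>M) = (\<Sum>j\<in>J. (c j)\<^sup>2)"
proof -
  show "(\<integral>\<omega>. (\<Sum>j\<in>J. c j * Y j \<omega>) \<partial>M) = 0"
    using i1 m1 by (simp add: integral_sum)
  have "(\<integral>\<omega>. (\<Sum>j\<in>J. c j * Y j \<omega>) * Y j0 \<omega> \<partial>M) = (\<integral>\<omega>. (\<Sum>j\<in>J. c j * (Y j \<omega> * Y j0 \<omega>)) \<partial>M)"
    by (simp add: sum_distrib_right mult.assoc)
  also have "\<dots> = (\<Sum>j\<in>J. c j * (if j = j0 then 1 else 0))"
    using i2 m2 j0 by (simp add: integral_sum)
  also have "\<dots> = (\<Sum>j\<in>J. if j = j0 then c j else 0)" by (rule sum.cong) auto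
  also have "\<dots> = c j0" using fin j0 by (simp add: sum.delta)
  finally show "(\<integral>\<omega>. (\<Sum>j\<in>J. c j * Y j \<omega>) * Y j0 \<omega> \<partial>M) = c j0" .
  have "(\<integral>\<omega>. (\<Sum>j\<in>J. c j * Y j \<omega>)\<^sup>2 \<partial>M) = (\<integral>\<omega>. (\<Sum>j\<in>J. \<Sum>j'\<in>J. c j * c j' * (Y j \<omega> * Y j' \<omega>)) \<partial>M)"
    by (simp add: power2_eq_square sum_product algebra_simps)
  also have "\<dots> = (\<Sum>j\<in>J. \<Sum>j'\<in>J. c j * c j' * (if j = j' then 1 else 0))"
    using i2 m2 by (simp add: integral_sum integrable_sum)
  also have "\<dots> = (\<Sum>j\<in>J. \<Sum>j'\<in>J. if j' = j then c j * c j' else 0)"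
    by (intro sum.cong) auto
  also have "\<dots> = (\<Sum>j\<in>J. (c j)\<^sup>2)" using fin by (simp add: sum.delta power2_eq_square)
  finally show "(\<integral>\<omega>. (\<Sum>j\<in>J. c j * Y j \<omega>)\<^sup>2 \<partial>M) = (\<Sum>j\<in>J. (c j)\<^sup>2)" .
qed



fun cf :: "nat \<Rightarrow> int \<times> int \<Rightarrow> (int \<times> int) \<times> nat \<Rightarrow> real" where
  "cf 0 v e = 0"
| "cf (Suc n) v e = (1/2) * (\<Sum>i\<in>{0,1::nat}. cf n (parent2 v i) e + (if e = (v, i) then 1 else 0))"

definition hcone :: "nat \<Rightarrow> nat \<Rightarrow> (int \<times> int) set" where
  "hcone t N = {w. 0 \<le> rank2 w \<and> (\<exists>k\<in>{1..N}. fst w \<le> int k \<and> snd w \<le> int t - int k)}"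

definition Fe :: "nat \<Rightarrow> nat \<Rightarrow> ((int \<times> int) \<times> nat) set" where
  "Fe t N = {(w, i). w \<in> hcone t N \<and> 1 \<le> rank2 w \<and> i \<in> {0,1}}"

lemma Fe_sub: "Fe t N \<subseteq> ({-int t..int N} \<times> {-int N..int t}) \<times> {0,1}"
proof
  fix e assume "e \<in> Fe t N"
  then obtain a b i k where e: "e = ((a,b),i)" "0 \<le> a + b" "k \<in> {1..N}" "a \<le> int k" "b \<le> int t - int k" "i \<in> {0,1}"
    by (auto simp: Fe_def hcone_def rank2_def)
  then show "e \<in> ({-int t..int N} \<times> {-int N..int t}) \<times> {0,1}" by auto
qed

lemma Fe_finite: "finite (Fe t N)"
  by (rule finite_subset[OF Fe_sub]) auto

lemma Fe_edges: "Fe t N \<subseteq> edges2"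
  by (auto simp: Fe_def edges2_def)

lemma parent_hcone:
  assumes "w \<in> hcone t N" "1 \<le> rank2 w" "i \<in> {0,1::nat}"
  shows "parent2 w i \<in> hcone t N" "rank2 (parent2 w i) = rank2 w - 1"
proof -
  obtain k where k: "k \<in> {1..N}" "fst w \<le> int k" "snd w \<le> int t - int k" using assms by (auto simp: hcone_def)
  have "0 \<le> rank2 (parent2 w i)" using assms by (auto simp: parent2_def rank2_def)
  moreover have "fst (parent2 w i) \<le> int k \<and> snd (parent2 w i) \<le> int t - int k"
    using k by (auto simp: parent2_def)
  ultimately show "parent2 w i \<in> hcone t N" using k(1) unfolding hcone_def by blast
  show "rank2 (parent2 w i) = rank2 w - 1" by (auto simp: parent2_def rank2_def)
qed

lemma tele:
  fixes H :: "(int \<times> int) \<times> nat \<Rightarrow> real"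
  assumes v: "v \<in> hcone t N" "1 \<le> rank2 v"
  shows "(\<Sum>e\<in>Fe t N. H e * cf (Suc n) v e)
    = (1/2) * (\<Sum>i\<in>{0,1::nat}. (\<Sum>e\<in>Fe t N. H e * cf n (parent2 v i) e) + H (v, i))"
proof -
  have mem: "(v, i) \<in> Fe t N" if "i \<in> {0,1::nat}" for i using v that by (auto simp: Fe_def)
  have d: "(\<Sum>e\<in>Fe t N. H e * (if e = (v, i) then 1 else 0)) = H (v, i)" if "i \<in> {0,1::nat}" for i
  proof -
    have "(\<Sum>e\<in>Fe t N. H e * (if e = (v, i) then 1 else 0)) = (\<Sum>e\<in>Fe t N. if e = (v, i) then H e else 0)"
      by (rule sum.cong) auto
    also have "\<dots> = H (v, i)" using mem[OF that] Fe_finite by (simp add: sum.delta')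
    finally show ?thesis .
  qed
  have "(\<Sum>e\<in>Fe t N. H e * cf (Suc n) v e)
     = (1/2) * (\<Sum>i\<in>{0,1::nat}. (\<Sum>e\<in>Fe t N. H e * cf n (parent2 v i) e) + (\<Sum>e\<in>Fe t N. H e * (if e = (v, i) then 1 else 0)))"
    by (simp add: sum_distrib_left sum.distrib algebra_simps)
  also have "\<dots> = (1/2) * (\<Sum>i\<in>{0,1::nat}. (\<Sum>e\<in>Fe t N. H e * cf n (parent2 v i) e) + H (v, i))"
    using d by simp
  finally show ?thesis .
qed

lemma X_repr:
  assumes model: "gaussian_broadcast_HS2 M X0 W X"
  shows "v \<in> hcone t N \<Longrightarrow> rank2 v = int n \<Longrightarrow> \<omega> \<in> space M \<Longrightarrow>
    X v \<omega> = X0 \<omega> + (\<Sum>e\<in>Fe t N. W e \<omega> * cf n v e)"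
proof (induction n arbitrary: v)
  case 0
  have "\<forall>v. rank2 v = 0 \<longrightarrow> (\<forall>\<omega>\<in>space M. X v \<omega> = X0 \<omega>)" using model
    unfolding gaussian_broadcast_HS2_def by blast
  then show ?case using 0 by (cases v) auto
next
  case (Suc n)
  have r: "1 \<le> rank2 v" using Suc by simp
  have rec: "X v \<omega> = (1/2) * (\<Sum>i\<in>{0,1::nat}. X (parent2 v i) \<omega> + W (v, i) \<omega>)"
  proof -
    have "\<forall>v. rank2 v \<ge> 1 \<longrightarrow> (\<forall>\<omega>\<in>space M.
        X v \<omega> = (1/2) * (\<Sum>i\<in>{0,1::nat}. X (parent2 v i) \<omega> + W (v, i) \<omega>))" using model
      unfolding gaussian_broadcast_HS2_def by blast
    then show ?thesis using r Suc.prems(3) by blast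
  qed
  have ih: "X (parent2 v i) \<omega> = X0 \<omega> + (\<Sum>e\<in>Fe t N. W e \<omega> * cf n (parent2 v i) e)" if "i \<in> {0,1}" for i
    using Suc.IH[of "parent2 v i"] parent_hcone[OF Suc.prems(1) r that] Suc.prems by simp
  show ?case
    unfolding rec tele[OF Suc.prems(1) r, of "\<lambda>e. W e \<omega>"] using ih by simp
qed

lemma Psi_repr:
  fixes Psi :: "int \<times> int \<Rightarrow> real"
  assumes z: "\<And>w. rank2 w = 0 \<Longrightarrow> Psi w = 0"
  shows "v \<in> hcone t N \<Longrightarrow> rank2 v = int n \<Longrightarrow>
    (\<Sum>e\<in>Fe t N. (Psi (fst e) - (Psi (parent2 (fst e) 0) + Psi (parent2 (fst e) 1)) / 2) * cf n v e) = Psi v"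
proof (induction n arbitrary: v)
  case 0
  then show ?case using z by simp
next
  case (Suc n)
  have r: "1 \<le> rank2 v" using Suc by simp
  have ih: "(\<Sum>e\<in>Fe t N. (Psi (fst e) - (Psi (parent2 (fst e) 0) + Psi (parent2 (fst e) 1)) / 2) * cf n (parent2 v i) e) = Psi (parent2 v i)" if "i \<in> {0,1}" for i
    using Suc.IH[of "parent2 v i"] parent_hcone[OF Suc.prems(1) r that] Suc.prems by simp
  show ?case
    unfolding tele[OF Suc.prems(1) r] using ih by simp
qed



definition phi :: "nat \<Rightarrow> int \<Rightarrow> real" where
  "phi L d = (if d \<le> int L then ((real L)\<^sup>2 - (real_of_int d)\<^sup>2)\<^sup>2 / (real L)^4 else 0)"

lemma phi_bounds:
  assumes "L \<ge> 1" "0 \<le> d" shows "0 \<le> phi L d" "phi L d \<le> 1"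
proof -
  show "0 \<le> phi L d" by (simp add: phi_def)
  show "phi L d \<le> 1"
  proof (cases "d \<le> int L")
    case True
    have s: "real L \<ge> 1" using assms by simp
    have "0 \<le> (real L)\<^sup>2 - (real_of_int d)\<^sup>2" using True assms
      by (simp add: abs_le_square_iff[symmetric]) 
    moreover have "(real L)\<^sup>2 - (real_of_int d)\<^sup>2 \<le> (real L)\<^sup>2" by simp
    ultimately have "((real L)\<^sup>2 - (real_of_int d)\<^sup>2)\<^sup>2 \<le> ((real L)\<^sup>2)\<^sup>2"
      by (intro power_mono) auto
    then show ?thesis using True s by (simp add: phi_def divide_le_eq power2_eq_square power4_eq_xxxx mult.assoc)
  qed (simp add: phi_def)
qed

lemma phi_zero: "phi L 0 = 1" if "L \<ge> 1" using that
  by (simp add: phi_def power2_eq_square power4_eq_xxxx)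

lemma phi_one: assumes "L \<ge> 1" shows "\<bar>phi L 1 - 1\<bar> \<le> 2 / (real L)\<^sup>2"
proof -
  define s where "s = real L"
  have s: "s \<ge> 1" using assms s_def by simp
  have "phi L 1 = (s\<^sup>2 - 1)\<^sup>2 / s^4" using assms by (simp add: phi_def s_def)
  also have "\<dots> = 1 - 2 / s\<^sup>2 + 1 / s^4" using s
    by (simp add: field_simps power2_eq_square power4_eq_xxxx)
  finally have e: "phi L 1 - 1 = - 2 / s\<^sup>2 + 1 / s^4" by simp
  have "1 / s^4 \<le> 1 / s\<^sup>2" using s
    by (intro divide_left_mono) (auto simp: power_increasing)
  moreover have "0 \<le> 1 / s^4" using s by simp
  moreover have "1 / s\<^sup>2 \<le> 2 / s\<^sup>2" using s by (simp add: divide_right_mono)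
  ultimately show ?thesis unfolding e s_def[symmetric] abs_le_iff by linarith
qed

lemma phi_big: "d \<ge> int L \<Longrightarrow> phi L d = 0"
  by (simp add: phi_def)

lemma phi_second:
  assumes "L \<ge> 1" "d \<ge> 1"
  shows "\<bar>phi L (d - 1) + phi L (d + 1) - 2 * phi L d\<bar> \<le> 18 / (real L)\<^sup>2"
proof -
  define s where "s = real L"
  have s: "s \<ge> 1" using assms s_def by simp
  have sp: "s > 0" using s by simp
  consider "d + 1 \<le> int L" | "d = int L" | "d > int L" by linarith
  then show ?thesis
  proof cases
    case 1
    define x where "x = real_of_int d"
    have x0: "x \<ge> 1" using assms x_def by simp
    have xs: "x + 1 \<le> s" using 1 x_def s_def by linarith
    have "phi L (d - 1) + phi L (d + 1) - 2 * phi L d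
        = ((s\<^sup>2 - (x-1)\<^sup>2)\<^sup>2 + (s\<^sup>2 - (x+1)\<^sup>2)\<^sup>2 - 2 * (s\<^sup>2 - x\<^sup>2)\<^sup>2) / s^4"
      using 1 by (simp add: phi_def s_def x_def diff_divide_distrib add_divide_distrib)
    also have "\<dots> = (12 * x\<^sup>2 + 2 - 4 * s\<^sup>2) / s^4"
      by (simp add: power2_eq_square algebra_simps)
    finally have e: "phi L (d - 1) + phi L (d + 1) - 2 * phi L d = (12 * x\<^sup>2 + 2 - 4 * s\<^sup>2) / s^4" .
    have x2: "x\<^sup>2 \<le> s\<^sup>2" using x0 xs by (intro power_mono) auto
    have s2: "1 \<le> s\<^sup>2" using s by simp
    have "\<bar>12 * x\<^sup>2 + 2 - 4 * s\<^sup>2\<bar> \<le> 18 * s\<^sup>2" using x2 s2 zero_le_power2[of x] unfolding abs_le_iff by linarith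
    then have "\<bar>12 * x\<^sup>2 + 2 - 4 * s\<^sup>2\<bar> / s^4 \<le> 18 * s\<^sup>2 / s^4"
      using sp by (intro divide_right_mono) auto
    also have "18 * s\<^sup>2 / s^4 = 18 / s\<^sup>2" using sp by (simp add: power2_eq_square power4_eq_xxxx)
    finally show ?thesis using sp by (simp add: e s_def abs_divide)
  next
    case 2
    have "phi L (d - 1) = ((s\<^sup>2 - (s - 1)\<^sup>2)\<^sup>2) / s^4" using 2 by (simp add: phi_def s_def)
    also have "\<dots> = (2 * s - 1)\<^sup>2 / s^4" by (simp add: power2_eq_square algebra_simps)
    also have "\<dots> \<le> (2 * s)\<^sup>2 / s^4" using s sp by (intro divide_right_mono power_mono) auto
    also have "\<dots> = 4 / s\<^sup>2" using sp by (simp add: power2_eq_square power4_eq_xxxx)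
    finally have "phi L (d - 1) \<le> 4 / s\<^sup>2" .
    moreover have "phi L (d + 1) = 0" "phi L d = 0" using 2 by (simp_all add: phi_def)
    moreover have "0 \<le> phi L (d - 1)" by (simp add: phi_def)
    ultimately show ?thesis using sp by (simp add: s_def)
  next
    case 3
    then have "phi L (d - 1) = 0" "phi L (d + 1) = 0" "phi L d = 0" by (simp_all add: phi_def)
    then show ?thesis by simp
  qed
qed

definition dist_iv :: "int \<Rightarrow> int \<Rightarrow> int \<Rightarrow> int" where
  "dist_iv \<alpha> \<beta> y = max 0 (max (\<alpha> - y) (y - \<beta>))"

definition uf :: "nat \<Rightarrow> int \<Rightarrow> int \<Rightarrow> int \<Rightarrow> real" where
  "uf L \<alpha> \<beta> y = phi L (dist_iv \<alpha> \<beta> y)"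

lemma uf_second:
  assumes "L \<ge> 1" "\<alpha> \<le> \<beta>"
  shows "\<bar>uf L \<alpha> \<beta> (y - 1) + uf L \<alpha> \<beta> (y + 1) - 2 * uf L \<alpha> \<beta> y\<bar> \<le> 18 / (real L)\<^sup>2"
proof -
  have p: "0 < 18 / (real L)\<^sup>2" using assms by simp
  have o: "\<bar>phi L 1 - 1\<bar> \<le> 9 / (real L)\<^sup>2" using phi_one[OF assms(1)] assms
    by (smt (verit) divide_right_mono zero_le_power2)
  consider "y > \<beta>" | "y < \<alpha>" | "\<alpha> \<le> y" "y \<le> \<beta>" by linarith
  then show ?thesis
  proof cases
    case 1
    have "dist_iv \<alpha> \<beta> (y - 1) = (y - \<beta>) - 1" "dist_iv \<alpha> \<beta> (y + 1) = (y - \<beta>) + 1"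
      "dist_iv \<alpha> \<beta> y = y - \<beta>" using 1 assms by (auto simp: dist_iv_def)
    then show ?thesis using phi_second[OF assms(1), of "y - \<beta>"] 1 by (simp add: uf_def)
  next
    case 2
    have "dist_iv \<alpha> \<beta> (y - 1) = (\<alpha> - y) + 1" "dist_iv \<alpha> \<beta> (y + 1) = (\<alpha> - y) - 1"
      "dist_iv \<alpha> \<beta> y = \<alpha> - y" using 2 assms by (auto simp: dist_iv_def)
    then show ?thesis using phi_second[OF assms(1), of "\<alpha> - y"] 2 by (simp add: uf_def add.commute)
  next
    case 3
    have a: "dist_iv \<alpha> \<beta> y = 0" using 3 by (auto simp: dist_iv_def)
    have b: "dist_iv \<alpha> \<beta> (y - 1) \<in> {0, 1}" "dist_iv \<alpha> \<beta> (y + 1) \<in> {0, 1}" using 3 by (auto simp: dist_iv_def)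
    have z: "phi L 0 = 1" using phi_zero assms by simp
    show ?thesis using b o p by (auto simp: uf_def a z abs_le_iff)
  qed
qed

lemma uf_bounds: "L \<ge> 1 \<Longrightarrow> 0 \<le> uf L \<alpha> \<beta> y \<and> uf L \<alpha> \<beta> y \<le> 1"
  using phi_bounds[of L "dist_iv \<alpha> \<beta> y"] by (simp add: uf_def dist_iv_def)

lemma uf_far: "dist_iv \<alpha> \<beta> y \<ge> int L \<Longrightarrow> uf L \<alpha> \<beta> y = 0"
  by (simp add: uf_def phi_big)



definition Psi :: "nat \<Rightarrow> nat \<Rightarrow> nat \<Rightarrow> int \<times> int \<Rightarrow> real" where
  "Psi t N L w = real_of_int (rank2 w) / real t * uf L (2 - int t) (2 * int N - int t) (fst w - snd w)"

definition Dp :: "nat \<Rightarrow> nat \<Rightarrow> nat \<Rightarrow> int \<times> int \<Rightarrow> real" where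
  "Dp t N L w = Psi t N L w - (Psi t N L (parent2 w 0) + Psi t N L (parent2 w 1)) / 2"

lemma Dp_formula:
  "Dp t N L w = uf L (2 - int t) (2 * int N - int t) (fst w - snd w) / real t
     - (real_of_int (rank2 w) - 1) / real t * (uf L (2 - int t) (2 * int N - int t) (fst w - snd w - 1)
        + uf L (2 - int t) (2 * int N - int t) (fst w - snd w + 1)
        - 2 * uf L (2 - int t) (2 * int N - int t) (fst w - snd w)) / 2"
proof -
  define U where "U = uf L (2 - int t) (2 * int N - int t)"
  define r where "r = real_of_int (rank2 w)"
  define y where "y = fst w - snd w"
  have p0: "Psi t N L (parent2 w 0) = (r - 1) / real t * U (y - 1)"
    unfolding Psi_def U_def r_def y_def parent2_def rank2_def by (simp add: algebra_simps)
  have p1: "Psi t N L (parent2 w 1) = (r - 1) / real t * U (y + 1)"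
    unfolding Psi_def U_def r_def y_def parent2_def rank2_def by (simp add: algebra_simps)
  have p: "Psi t N L w = r / real t * U y" unfolding Psi_def U_def r_def y_def by simp
  have "Dp t N L w = r / real t * U y - ((r - 1) / real t * U (y - 1) + (r - 1) / real t * U (y + 1)) / 2"
    unfolding Dp_def p p0 p1 ..
  also have "\<dots> = U y / real t - (r - 1) / real t * (U (y - 1) + U (y + 1) - 2 * U y) / 2"
  proof (cases "t = 0")
    case False then show ?thesis by (simp add: field_simps)
  qed simp
  finally show ?thesis unfolding U_def r_def y_def .
qed

lemma Dp_bound:
  assumes t: "t \<ge> 1" and N: "N \<ge> 1" and L: "L \<ge> 1" and r: "1 \<le> rank2 w" "rank2 w \<le> int t"
  shows "\<bar>Dp t N L w\<bar> \<le> 1 / real t + 9 / (real L)\<^sup>2"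
proof -
  define u where "u = uf L (2 - int t) (2 * int N - int t)"
  define y where "y = fst w - snd w"
  define q where "q = (real_of_int (rank2 w) - 1) / real t"
  have ab: "2 - int t \<le> 2 * int N - int t" using N by simp
  have sd: "\<bar>u (y - 1) + u (y + 1) - 2 * u y\<bar> \<le> 18 / (real L)\<^sup>2"
    unfolding u_def by (rule uf_second[OF L ab])
  have q: "0 \<le> q" "q \<le> 1" using r t by (auto simp: q_def)
  have u: "0 \<le> u y" "u y \<le> 1" using uf_bounds[OF L] by (auto simp: u_def)
  have e: "Dp t N L w = u y / real t - q * (u (y - 1) + u (y + 1) - 2 * u y) / 2"
    unfolding Dp_formula u_def y_def q_def by simp
  have "\<bar>q * (u (y - 1) + u (y + 1) - 2 * u y)\<bar> \<le> 1 * (18 / (real L)\<^sup>2)"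
    unfolding abs_mult using q sd by (intro mult_mono) auto
  moreover have "\<bar>u y / real t\<bar> \<le> 1 / real t" using u t by (simp add: divide_right_mono)
  ultimately have h: "\<bar>q * (u (y - 1) + u (y + 1) - 2 * u y)\<bar> \<le> 2 * (9 / (real L)\<^sup>2)" "\<bar>u y / real t\<bar> \<le> 1 / real t"
    by auto
  show ?thesis unfolding e using h by (simp only: abs_le_iff) linarith
qed

lemma Dp_zero:
  assumes "dist_iv (2 - int t) (2 * int N - int t) (fst w - snd w) > int L"
  shows "Dp t N L w = 0"
proof -
  have d: "dist_iv \<alpha> \<beta> (y - 1) \<ge> int L" "dist_iv \<alpha> \<beta> (y + 1) \<ge> int L" "dist_iv \<alpha> \<beta> y \<ge> int L"
    if "dist_iv \<alpha> \<beta> y > int L" for \<alpha> \<beta> y using that by (auto simp: dist_iv_def)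
  show ?thesis unfolding Dp_formula using d[OF assms] by (simp add: uf_far)
qed

lemma sum_sq_bound:
  fixes f :: "'b \<Rightarrow> real"
  assumes "finite E" "\<And>e. e \<in> E \<Longrightarrow> P e \<Longrightarrow> \<bar>f e\<bar> \<le> c" "\<And>e. e \<in> E \<Longrightarrow> \<not> P e \<Longrightarrow> f e = 0"
  shows "(\<Sum>e\<in>E. (f e)\<^sup>2) \<le> real (card {e\<in>E. P e}) * c\<^sup>2"
proof -
  have "(\<Sum>e\<in>E. (f e)\<^sup>2) = (\<Sum>e\<in>{e\<in>E. P e}. (f e)\<^sup>2)"
    using assms by (intro sum.mono_neutral_right) auto
  also have "\<dots> \<le> (\<Sum>e\<in>{e\<in>E. P e}. c\<^sup>2)"
    using assms by (intro sum_mono) (metis (mono_tags, lifting) abs_ge_zero mem_Collect_eq power2_abs power_mono)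
  finally show ?thesis by simp
qed

lemma card_near:
  assumes N: "N \<ge> 1"
  shows "card {e\<in>Fe t N. dist_iv (2 - int t) (2 * int N - int t) (fst (fst e) - snd (fst e)) \<le> int L}
     \<le> t * (2 * N + 2 * L) * 2"
proof -
  define S where "S = {e\<in>Fe t N. dist_iv (2 - int t) (2 * int N - int t) (fst (fst e) - snd (fst e)) \<le> int L}"
  define g where "g = (\<lambda>e::(int\<times>int)\<times>nat. (rank2 (fst e), fst (fst e) - snd (fst e), snd e))"
  define T where "T = {1..int t} \<times> {2 - int t - int L .. 2 * int N - int t + int L} \<times> {0,1::nat}"
  have inj: "inj_on g S"
  proof (rule inj_onI)
    fix x y assume "x \<in> S" "y \<in> S" "g x = g y"
    obtain a b i where x: "x = ((a,b),i)" by (metis prod.collapse)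
    obtain a' b' i' where y: "y = ((a',b'),i')" by (metis prod.collapse)
    have "a + b = a' + b'" "a - b = a' - b'" "i = i'" using \<open>g x = g y\<close> x y by (auto simp: g_def rank2_def)
    then have "a = a'" "b = b'" "i = i'" by linarith+
    then show "x = y" using x y by simp
  qed
  have sub: "g ` S \<subseteq> T"
  proof
    fix z assume "z \<in> g ` S"
    then obtain e where e: "e \<in> S" "z = g e" by auto
    obtain a b i where abi: "e = ((a,b),i)" by (metis prod.collapse)
    obtain k where k: "k \<in> {1..N}" "a \<le> int k" "b \<le> int t - int k" "1 \<le> a + b" "i \<in> {0,1}"
      using e(1) abi by (auto simp: S_def Fe_def hcone_def rank2_def)
    have dd: "dist_iv (2 - int t) (2 * int N - int t) (a - b) \<le> int L" using e(1) abi by (simp add: S_def)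
    then show "z \<in> T" using k e(2) abi unfolding T_def g_def dist_iv_def rank2_def by auto
  qed
  have "card S \<le> card T" using card_inj_on_le[OF inj sub] by (simp add: T_def)
  also have "card T = t * nat (2 * int N + 2 * int L - 1) * 2"
    unfolding T_def by (simp add: card_cartesian_product)
  also have "\<dots> \<le> t * (2 * N + 2 * L) * 2" by (intro mult_le_mono) auto
  finally show ?thesis unfolding S_def .
qed


theorem mainTheorem15:
  fixes M :: "'a measure" and X0 :: "'a \<Rightarrow> real"
    and W :: "(int \<times> int) \<times> nat \<Rightarrow> 'a \<Rightarrow> real" and X :: "int \<times> int \<Rightarrow> 'a \<Rightarrow> real"
    and t N :: nat and a :: "nat \<Rightarrow> real"
  assumes model: "gaussian_broadcast_HS2 M X0 W X"
    and "t > 0" and "N > 0"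
    and "\<exists>k\<in>{1..N}. a k \<noteq> 0"
  shows "let \<zeta> = (\<lambda>\<omega>. \<Sum>k=1..N. a k * X (int k, int t - int k) \<omega>);
             cov = (\<integral>\<omega>. \<zeta> \<omega> * X0 \<omega> \<partial>M) - (\<integral>\<omega>. \<zeta> \<omega> \<partial>M) * (\<integral>\<omega>. X0 \<omega> \<partial>M);
             var = (\<integral>\<omega>. (\<zeta> \<omega> - (\<integral>\<omega>'. \<zeta> \<omega>' \<partial>M))\<^sup>2 \<partial>M)
         in cov / sqrt var \<le> 2 ^ 14 * real N powr (3/2) / real t powr (1/4)"
proof -
  have P: "prob_space M" using model by (simp add: gaussian_broadcast_HS2_def)
  interpret prob_space M by (rule P)
  have t1: "t \<ge> 1" and N1: "N \<ge> 1" using assms by auto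
  define L where "L = nat \<lfloor>sqrt (real t)\<rfloor>"
  have st1: "sqrt (real t) \<ge> 1" using t1 by simp
  have fl: "real_of_int \<lfloor>sqrt (real t)\<rfloor> \<le> sqrt (real t)" "sqrt (real t) < real_of_int \<lfloor>sqrt (real t)\<rfloor> + 1"
    by linarith+
  have fl1: "\<lfloor>sqrt (real t)\<rfloor> \<ge> 1" using st1 by linarith
  have Lr: "real L = real_of_int \<lfloor>sqrt (real t)\<rfloor>" unfolding L_def using fl1 by simp
  have L1: "L \<ge> 1" using fl1 L_def by linarith
  have Ls: "real L \<le> sqrt (real t)" using fl Lr by simp
  have Lp: "real L \<ge> 1" using L1 by simp
  have tL: "real t \<le> 4 * (real L)\<^sup>2"
  proof -
    have "sqrt (real t) \<le> 2 * real L" using fl Lr Lp by linarith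
    then have "(sqrt (real t))\<^sup>2 \<le> (2 * real L)\<^sup>2" by (intro power_mono) auto
    then show ?thesis by (simp add: power_mult_distrib)
  qed
  define v where "v k = (int k, int t - int k)" for k :: nat
  have vc: "v k \<in> hcone t N" if "k \<in> {1..N}" for k
    using that by (auto simp: v_def hcone_def rank2_def)
  have vr: "rank2 (v k) = int t" for k by (simp add: v_def rank2_def)
  define A where "A = (\<Sum>k=1..N. a k)"
  define b where "b e = (\<Sum>k=1..N. a k * cf t (v k) e)" for e
  define Gd where "Gd e = Dp t N L (fst e)" for e :: "(int \<times> int) \<times> nat"
  define F where "F = Fe t N"
  have finF: "finite F" unfolding F_def by (rule Fe_finite)
  define \<zeta> where "\<zeta> = (\<lambda>\<omega>. \<Sum>k=1..N. a k * X (int k, int t - int k) \<omega>)"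
  have zeta: "\<zeta> \<omega> = A * X0 \<omega> + (\<Sum>e\<in>F. b e * W e \<omega>)" if \<omega>: "\<omega> \<in> space M" for \<omega>
  proof -
    have "\<zeta> \<omega> = (\<Sum>k=1..N. a k * (X0 \<omega> + (\<Sum>e\<in>F. W e \<omega> * cf t (v k) e)))"
      unfolding \<zeta>_def F_def using X_repr[OF model vc vr \<omega>] by (intro sum.cong) (auto simp: v_def)
    also have "\<dots> = (\<Sum>k=1..N. a k * X0 \<omega>) + (\<Sum>k=1..N. \<Sum>e\<in>F. a k * cf t (v k) e * W e \<omega>)"
      by (simp add: distrib_left sum.distrib sum_distrib_left mult_ac)
    also have "\<dots> = A * X0 \<omega> + (\<Sum>e\<in>F. b e * W e \<omega>)"
      unfolding A_def b_def by (simp add: sum_distrib_right sum.swap[of _ F])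
    finally show ?thesis .
  qed
  define J where "J = insert None (Some ` F)"
  define c where "c j = (case j of None \<Rightarrow> A | Some e \<Rightarrow> b e)" for j
  have finJ: "finite J" using finF by (simp add: J_def)
  have zetaJ: "\<zeta> \<omega> = (\<Sum>j\<in>J. c j * Yf X0 W j \<omega>)" if "\<omega> \<in> space M" for \<omega>
  proof -
    have "(\<Sum>j\<in>J. c j * Yf X0 W j \<omega>) = A * X0 \<omega> + (\<Sum>j\<in>Some ` F. c j * Yf X0 W j \<omega>)"
      unfolding J_def using finF by (subst sum.insert) (auto simp: c_def Yf_def)
    also have "(\<Sum>j\<in>Some ` F. c j * Yf X0 W j \<omega>) = (\<Sum>e\<in>F. b e * W e \<omega>)"
      by (subst sum.reindex) (auto simp: c_def Yf_def)
    finally show ?thesis using zeta[OF that] by simp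
  qed
  have J0: "J \<subseteq> {None} \<union> Some ` edges2" using Fe_edges unfolding J_def F_def by auto
  have None: "None \<in> J" by (simp add: J_def)
  note MO = model_orth[OF model]
  have o1: "\<And>j. j \<in> J \<Longrightarrow> integrable M (Yf X0 W j)" by (rule MO(1)[OF subsetD[OF J0] subsetD[OF J0 None]])
  have o2: "\<And>j. j \<in> J \<Longrightarrow> (\<integral>\<omega>. Yf X0 W j \<omega> \<partial>M) = 0" by (rule MO(2)[OF subsetD[OF J0] subsetD[OF J0 None]])
  have o3: "\<And>j j'. j \<in> J \<Longrightarrow> j' \<in> J \<Longrightarrow> integrable M (\<lambda>\<omega>. Yf X0 W j \<omega> * Yf X0 W j' \<omega>)"
    by (rule MO(3)[OF subsetD[OF J0] subsetD[OF J0]])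
  have o4: "\<And>j j'. j \<in> J \<Longrightarrow> j' \<in> J \<Longrightarrow> (\<integral>\<omega>. Yf X0 W j \<omega> * Yf X0 W j' \<omega> \<partial>M) = (if j = j' then 1 else 0)"
    by (rule MO(4)[OF subsetD[OF J0] subsetD[OF J0]])
  note LC = lincomb[OF finJ o1 o2 o3 o4 None, of c]
  have I1: "(\<integral>\<omega>. \<zeta> \<omega> \<partial>M) = 0"
  proof -
    have "(\<integral>\<omega>. \<zeta> \<omega> \<partial>M) = (\<integral>\<omega>. (\<Sum>j\<in>J. c j * Yf X0 W j \<omega>) \<partial>M)"
      by (rule Bochner_Integration.integral_cong[OF refl]) (auto simp: zetaJ)
    then show ?thesis using LC(1) by simp
  qed
  have I2: "(\<integral>\<omega>. \<zeta> \<omega> * X0 \<omega> \<partial>M) = A"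
  proof -
    have "(\<integral>\<omega>. \<zeta> \<omega> * X0 \<omega> \<partial>M) = (\<integral>\<omega>. (\<Sum>j\<in>J. c j * Yf X0 W j \<omega>) * Yf X0 W None \<omega> \<partial>M)"
      by (rule Bochner_Integration.integral_cong[OF refl]) (auto simp: zetaJ Yf_def)
    then show ?thesis using LC(2) by (simp add: c_def)
  qed
  have IX: "(\<integral>\<omega>. X0 \<omega> \<partial>M) = 0" using MO(2)[of None None] by (simp add: Yf_def)
  define B where "B = (\<Sum>e\<in>F. (b e)\<^sup>2)"
  have B0: "B \<ge> 0" unfolding B_def by (simp add: sum_nonneg)
  have I3: "(\<integral>\<omega>. (\<zeta> \<omega> - (\<integral>\<omega>'. \<zeta> \<omega>' \<partial>M))\<^sup>2 \<partial>M) = A\<^sup>2 + B"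
  proof -
    have "(\<integral>\<omega>. (\<zeta> \<omega> - (\<integral>\<omega>'. \<zeta> \<omega>' \<partial>M))\<^sup>2 \<partial>M) = (\<integral>\<omega>. (\<Sum>j\<in>J. c j * Yf X0 W j \<omega>)\<^sup>2 \<partial>M)"
      by (rule Bochner_Integration.integral_cong[OF refl]) (auto simp: zetaJ I1)
    also have "\<dots> = (\<Sum>j\<in>J. (c j)\<^sup>2)" by (rule LC(3))
    also have "\<dots> = A\<^sup>2 + (\<Sum>j\<in>Some ` F. (c j)\<^sup>2)"
      unfolding J_def using finF by (subst sum.insert) (auto simp: c_def)
    also have "(\<Sum>j\<in>Some ` F. (c j)\<^sup>2) = B"
      unfolding B_def by (subst sum.reindex) (auto simp: c_def)
    finally show ?thesis .
  qed
  have Pz: "\<And>w. rank2 w = 0 \<Longrightarrow> Psi t N L w = 0" by (simp add: Psi_def)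
  have Pv: "Psi t N L (v k) = 1" if "k \<in> {1..N}" for k
  proof -
    have "dist_iv (2 - int t) (2 * int N - int t) (fst (v k) - snd (v k)) = 0"
      using that by (auto simp: dist_iv_def v_def)
    then show ?thesis using t1 L1 by (simp add: Psi_def vr uf_def phi_zero)
  qed
  have Ak: "(\<Sum>e\<in>F. Gd e * cf t (v k) e) = 1" if "k \<in> {1..N}" for k
    using Psi_repr[of "Psi t N L", OF Pz vc[OF that] vr] Pv[OF that]
    unfolding Gd_def F_def Dp_def by simp
  have AG: "A = (\<Sum>e\<in>F. Gd e * b e)"
  proof -
    have "A = (\<Sum>k=1..N. a k * (\<Sum>e\<in>F. Gd e * cf t (v k) e))"
      unfolding A_def by (intro sum.cong) (auto simp: Ak)
    also have "\<dots> = (\<Sum>e\<in>F. Gd e * b e)"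
      unfolding b_def by (simp add: sum_distrib_left sum.swap[of _ F] mult_ac)
    finally show ?thesis .
  qed
  define S where "S = (\<Sum>e\<in>F. (Gd e)\<^sup>2)"
  have CS: "A\<^sup>2 \<le> S * B" unfolding AG S_def B_def by (rule Cauchy_Schwarz_ineq_sum)
  have rk: "1 \<le> rank2 (fst e) \<and> rank2 (fst e) \<le> int t" if "e \<in> F" for e
    using that by (auto simp: F_def Fe_def hcone_def rank2_def)
  have S1: "S \<le> real (card {e\<in>F. dist_iv (2 - int t) (2 * int N - int t) (fst (fst e) - snd (fst e)) \<le> int L})
      * (1 / real t + 9 / (real L)\<^sup>2)\<^sup>2"
    unfolding S_def
  proof (rule sum_sq_bound[OF finF])
    fix e assume "e \<in> F"
    then show "\<bar>Gd e\<bar> \<le> 1 / real t + 9 / (real L)\<^sup>2"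
      unfolding Gd_def using Dp_bound[OF t1 N1 L1] rk by blast
  next
    fix e assume "e \<in> F" "\<not> dist_iv (2 - int t) (2 * int N - int t) (fst (fst e) - snd (fst e)) \<le> int L"
    then show "Gd e = 0" unfolding Gd_def by (intro Dp_zero) simp
  qed
  have card: "real (card {e\<in>F. dist_iv (2 - int t) (2 * int N - int t) (fst (fst e) - snd (fst e)) \<le> int L})
      \<le> 4 * real t * (real N + real L)"
  proof -
    have "card {e\<in>F. dist_iv (2 - int t) (2 * int N - int t) (fst (fst e) - snd (fst e)) \<le> int L}
      \<le> t * (2 * N + 2 * L) * 2" unfolding F_def by (rule card_near[OF N1])
    then have "real (card {e\<in>F. dist_iv (2 - int t) (2 * int N - int t) (fst (fst e) - snd (fst e)) \<le> int L})
      \<le> real (t * (2 * N + 2 * L) * 2)" by (simp only: of_nat_le_iff)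
    moreover have "real (t * (2 * N + 2 * L) * 2) = 4 * real t * (real N + real L)" by (simp add: algebra_simps)
    ultimately show ?thesis by linarith
  qed
  have tp: "real t > 0" using t1 by simp
  have c37: "1 / real t + 9 / (real L)\<^sup>2 \<le> 37 / real t"
  proof -
    have "9 / (real L)\<^sup>2 \<le> 36 / real t" using tL tp Lp
      by (simp add: divide_simps)
    moreover have "1 / real t + 36 / real t = 37 / real t" by (simp add: add_divide_distrib[symmetric])
    ultimately show ?thesis by linarith
  qed
  have S2: "S \<le> 4 * real t * (real N + real L) * (37 / real t)\<^sup>2"
  proof -
    have "0 \<le> 1 / real t + 9 / (real L)\<^sup>2" using tp by simp
    then have "(1 / real t + 9 / (real L)\<^sup>2)\<^sup>2 \<le> (37 / real t)\<^sup>2" using c37 by (intro power_mono) auto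
    then show ?thesis using S1 card by (meson mult_mono order_trans of_nat_0_le_iff zero_le_power2)
  qed
  have S3: "4 * real t * (real N + real L) * (37 / real t)\<^sup>2 = 5476 * (real N + real L) / real t"
    using tp by (simp add: power2_eq_square field_simps)
  define R where "R = 2 ^ 14 * real N powr (3/2) / real t powr (1/4)"
  have R0: "R \<ge> 0" unfolding R_def by simp
  have R2: "R\<^sup>2 = 2 ^ 28 * real N ^ 3 / sqrt (real t)"
  proof -
    have "(real N powr (3/2))\<^sup>2 = real N powr (3/2) * real N powr (3/2)" by (simp only: power2_eq_square)
    also have "\<dots> = real N powr (3/2 + 3/2)" by (simp only: powr_add)
    also have "\<dots> = real N powr 3" by simp
    also have "\<dots> = real N ^ 3" by (rule powr_numeral) simp
    finally have n: "(real N powr (3/2))\<^sup>2 = real N ^ 3" .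
    have "(real t powr (1/4))\<^sup>2 = real t powr (1/4) * real t powr (1/4)" by (simp only: power2_eq_square)
    also have "\<dots> = real t powr (1/4 + 1/4)" by (simp only: powr_add)
    also have "\<dots> = real t powr (1/2)" by simp
    also have "\<dots> = sqrt (real t)" by (rule powr_half_sqrt) simp
    finally have tt: "(real t powr (1/4))\<^sup>2 = sqrt (real t)" .
    show ?thesis unfolding R_def by (simp add: power_divide power_mult_distrib n tt)
  qed
  have st: "sqrt (real t) \<le> real t"
  proof -
    have "sqrt (real t) * 1 \<le> sqrt (real t) * sqrt (real t)" using st1 by (intro mult_left_mono) auto
    then show ?thesis by simp
  qed
  have SR: "S \<le> R\<^sup>2"
  proof -
    have sp: "sqrt (real t) > 0" using tp by simp
    have n3: "real N \<le> real N ^ 3"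
    proof -
      have "1 \<le> real N ^ 2" using N1 by simp
      then have "real N * 1 \<le> real N * real N ^ 2" by (intro mult_left_mono) auto
      then show ?thesis by (simp add: power3_eq_cube power2_eq_square)
    qed
    have k1: "real N * sqrt (real t) \<le> real N * real t" using st by (intro mult_left_mono) auto
    have k2: "real L * sqrt (real t) \<le> real t"
    proof -
      have "real L * sqrt (real t) \<le> sqrt (real t) * sqrt (real t)" using Ls by (intro mult_right_mono) auto
      then show ?thesis by simp
    qed
    have k3: "1 * real t \<le> real N * real t" using N1 tp by (intro mult_right_mono) auto
    have k4: "real N * real t \<le> real N ^ 3 * real t" using n3 tp by (intro mult_right_mono) auto
    have "5476 * (real N + real L) * sqrt (real t) \<le> 2 ^ 28 * real N ^ 3 * real t"
      using k1 k2 k3 k4 by (simp add: algebra_simps)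
    then have "5476 * (real N + real L) / real t \<le> 2 ^ 28 * real N ^ 3 / sqrt (real t)"
      using tp sp by (simp add: divide_simps)
    then show ?thesis using S2 S3 R2 by linarith
  qed
  have AB: "A\<^sup>2 \<le> R\<^sup>2 * (A\<^sup>2 + B)"
  proof -
    have "S * B \<le> R\<^sup>2 * B" by (rule mult_right_mono[OF SR B0])
    then have "A\<^sup>2 \<le> R\<^sup>2 * B" using CS by linarith
    also have "\<dots> \<le> R\<^sup>2 * (A\<^sup>2 + B)" by (intro mult_left_mono) auto
    finally show ?thesis .
  qed
  have fin: "A / sqrt (A\<^sup>2 + B) \<le> R"
  proof (cases "A > 0")
    case False
    then have "A \<le> 0" by simp
    then have "A / sqrt (A\<^sup>2 + B) \<le> 0" by (intro divide_nonpos_nonneg) (use B0 in auto)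
    then show ?thesis using R0 by linarith
  next
    case True
    have pos: "sqrt (A\<^sup>2 + B) > 0" using True B0 by (simp add: add_pos_nonneg)
    have "A = sqrt (A\<^sup>2)" using True by simp
    also have "\<dots> \<le> sqrt (R\<^sup>2 * (A\<^sup>2 + B))" using AB by (rule real_sqrt_le_mono)
    also have "\<dots> = R * sqrt (A\<^sup>2 + B)" using R0 by (simp add: real_sqrt_mult)
    finally show ?thesis using pos by (simp add: divide_le_eq)
  qed
  have I3': "(\<integral>\<omega>. (\<zeta> \<omega>)\<^sup>2 \<partial>M) = A\<^sup>2 + B" using I3 I1 by simp
  show ?thesis
    unfolding Let_def \<zeta>_def[symmetric] R_def[symmetric] using fin by (simp add: I1 I2 I3' IX)
qed


end
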